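(* Let $\phi\in T_m(\mathbb{R}^d)$ be a conjugation invariant homogeneous of degree $m$. Then $\phi=\operatorname{shift}_m(\phi)$.
   Context: $T_m(\mathbb{R}^d)=(\mathbb{R}^d)^{\otimes m}$ has basis the words of length $m$ over $\{1,\dots,d\}$. $\operatorname{shift}_m$ is the linear automorphism of $T_m$ with $\operatorname{shift}_m(w_1\cdots w_m)=w_m w_1\cdots w_{m-1}$. A path is a piecewise smooth $X:[0,1]\to\mathbb{R}^d$ with iterated-integrals signature $S(X)\in T((\mathbb{R}^d))$ ($\langle S(X),\mathsf e\rangle=1$, $\langle S(X),wi\rangle=\int_0^1\langle S(X|_{[0,t]}),w\rangle dX^i(t)$, where $\langle\sum_w c_w w,v\rangle=c_v$). $\sqcup$ is concatenation, $B^{-1}$ the reversed path. $\phi$ is a conjugation invariant if $\langle S(A),\phi\rangle=\langle S(B\sqcup A\sqcup B^{-1}),\phi\rangle$ for all paths $A,B$. *)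

theory Defs
  imports "HOL-Analysis.Analysis"
begin

text \<open>Paths X : [0,1] -> R^d are functions real => real^'n with d = CARD('n);
  words over {1..d} are lists over 'n.\<close>

definition piecewise_smooth_path :: "(real \<Rightarrow> real^'n) \<Rightarrow> bool" where
  "piecewise_smooth_path X \<longleftrightarrow> X piecewise_C1_differentiable_on {0..1}"

text \<open>Iterated integrals, indexed by the reversed word:
  sig_rev X (i # ws) t = integral_0^t sig_rev X ws s dX^i(s).\<close>
fun sig_rev :: "(real \<Rightarrow> real^'n) \<Rightarrow> 'n list \<Rightarrow> real \<Rightarrow> real" where
  "sig_rev X [] t = 1"
| "sig_rev X (i # ws) t =
     integral {0..t} (\<lambda>s. sig_rev X ws s * (vector_derivative X (at s)) $ i)"

definition sig_coeff :: "(real \<Rightarrow> real^'n) \<Rightarrow> 'n list \<Rightarrow> real" where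
  "sig_coeff X w = sig_rev X (rev w) 1"

definition in_Tm :: "nat \<Rightarrow> ('n list \<Rightarrow> real) \<Rightarrow> bool" where
  "in_Tm m \<phi> \<longleftrightarrow> (\<forall>w. length w \<noteq> m \<longrightarrow> \<phi> w = 0)"

definition sig_pair :: "nat \<Rightarrow> (real \<Rightarrow> real^'n::finite) \<Rightarrow> ('n list \<Rightarrow> real) \<Rightarrow> real" where
  "sig_pair m X \<phi> = (\<Sum>w\<in>{w::'n list. length w = m}. sig_coeff X w * \<phi> w)"

text \<open>shift_m(w_1...w_m) = w_m w_1 ... w_{m-1}, extended linearly; hence the
  coefficient of v in shift_m(phi) is the coefficient of rotate1 v in phi.\<close>
definition shift_m :: "nat \<Rightarrow> ('n list \<Rightarrow> real) \<Rightarrow> ('n list \<Rightarrow> real)" where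
  "shift_m m \<phi> = (\<lambda>v. if length v = m then \<phi> (rotate1 v) else 0)"

definition path_concat :: "(real \<Rightarrow> real^'n) \<Rightarrow> (real \<Rightarrow> real^'n) \<Rightarrow> (real \<Rightarrow> real^'n)" where
  "path_concat A B = (\<lambda>t. if t \<le> 1/2 then A (2 * t) else B (2 * t - 1) - B 0 + A 1)"

definition conjugation_invariant :: "nat \<Rightarrow> ('n::finite list \<Rightarrow> real) \<Rightarrow> bool" where
  "conjugation_invariant m \<phi> \<longleftrightarrow>
     (\<forall>A B :: real \<Rightarrow> real^'n. piecewise_smooth_path A \<longrightarrow> piecewise_smooth_path B \<longrightarrow>
        sig_pair m A \<phi> = sig_pair m (path_concat (path_concat B A) (reversepath B)) \<phi>)"

end

theory Submission
  imports Defs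
begin


definition lin :: "real^'n \<Rightarrow> real^'n \<Rightarrow> real \<Rightarrow> real^'n" where
  "lin p v = (\<lambda>t. p + t *\<^sub>R v)"

definition lin_sig :: "real^'n \<Rightarrow> 'n list \<Rightarrow> real" where
  "lin_sig v u = prod_list (map (\<lambda>x. v$x) u) / fact (length u)"

lemma lin_deriv: "((lin p v) has_vector_derivative v) (at s)"
  unfolding lin_def by (auto intro!: derivative_eq_intros)

lemma lin_vd: "vector_derivative (lin p v) (at s) = v"
  by (rule vector_derivative_at[OF lin_deriv])

lemma pow_integral:
  fixes t :: real assumes "0 \<le> t"
  shows "((\<lambda>s. s^n * c) has_integral (t^Suc n / Suc n * c)) {0..t}"
proof -
  have "((\<lambda>s. s^n * c) has_integral ((\<lambda>s. s^Suc n / Suc n * c) t - (\<lambda>s. s^Suc n / Suc n * c) 0)) {0..t}"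
  proof (rule fundamental_theorem_of_calculus[where f="\<lambda>s. s^Suc n / Suc n * c", OF assms])
    fix x :: real
    have "((\<lambda>s. s^Suc n / Suc n * c) has_real_derivative x^n * c) (at x)"
    proof -
      have "((\<lambda>s. s^Suc n) has_real_derivative (Suc n * x^n)) (at x)"
        using DERIV_pow[of "Suc n" x] by simp
      then have "((\<lambda>s. s^Suc n / Suc n * c) has_real_derivative (Suc n * x^n) / Suc n * c) (at x)"
        by (intro DERIV_cmult_right DERIV_cdivide)
      then show ?thesis by (simp del: of_nat_Suc)
    qed
    then show "((\<lambda>s. s^Suc n / Suc n * c) has_vector_derivative x^n * c) (at x within {0..t})"
      using has_real_derivative_iff_has_vector_derivative has_vector_derivative_at_within by blast
  qed
  then show ?thesis by simp
qed

lemma lin_sig_rev: "0 \<le> t \<Longrightarrow> sig_rev (lin p v) ws t = t ^ length ws * lin_sig v ws"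
proof (induction ws arbitrary: t)
  case Nil
  then show ?case by (simp add: lin_sig_def)
next
  case (Cons i ws)
  have "sig_rev (lin p v) (i # ws) t = integral {0..t} (\<lambda>s. s ^ length ws * (lin_sig v ws * v$i))"
    unfolding sig_rev.simps
    apply (rule integral_cong)
    using Cons.IH by (auto simp: lin_vd)
  also have "\<dots> = t ^ Suc (length ws) / Suc (length ws) * (lin_sig v ws * v$i)"
    using pow_integral[OF Cons.prems] by (rule integral_unique)
  also have "\<dots> = t ^ length (i#ws) * lin_sig v (i # ws)"
    by (simp add: lin_sig_def field_simps)
  finally show ?case .
qed

definition good :: "(real \<Rightarrow> real^'n) \<Rightarrow> bool" where
  "good X \<longleftrightarrow> (\<exists>S. finite S \<and> (\<forall>s\<in>{0<..<1} - S. X differentiable (at s))) \<and>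
     (\<forall>ws i t. 0 \<le> t \<and> t \<le> 1 \<longrightarrow> (\<lambda>s. sig_rev X ws s * vector_derivative X (at s) $ i) integrable_on {0..t})"

lemma good_lin: "good (lin p v)"
  unfolding good_def
proof (intro conjI allI impI)
  show "\<exists>S. finite S \<and> (\<forall>s\<in>{0<..<1} - S. lin p v differentiable at s)"
    using lin_deriv by (metis differentiableI_vector finite.emptyI)
  fix ws i and t :: real assume t: "0 \<le> t \<and> t \<le> 1"
  have I: "((\<lambda>s. s ^ length ws * (lin_sig v ws * v$i)) has_integral (t^Suc (length ws) / Suc (length ws) * (lin_sig v ws * v$i))) {0..t}"
    using t by (intro pow_integral) auto
  have "((\<lambda>s. sig_rev (lin p v) ws s * vector_derivative (lin p v) (at s) $ i) has_integral (t^Suc (length ws) / Suc (length ws) * (lin_sig v ws * v$i))) {0..t}"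
    by (rule has_integral_spike_finite[where S="{}", OF _ _ I]) (auto simp: lin_sig_rev lin_vd)
  then show "(\<lambda>s. sig_rev (lin p v) ws s * vector_derivative (lin p v) (at s) $ i) integrable_on {0..t}"
    by blast
qed

lemma lin_valid: "piecewise_smooth_path (lin p v)"
proof -
  have "lin p v = linepath p (p + v)"
    by (auto simp: lin_def linepath_def fun_eq_iff algebra_simps)
  then show ?thesis unfolding piecewise_smooth_path_def
    using valid_path_linepath valid_path_def by metis
qed

lemma sub1:
  fixes h :: "real \<Rightarrow> real"
  assumes "0 \<le> t" "(h has_integral I) {0..2*t}"
  shows "((\<lambda>x. 2 * h (2 * x)) has_integral I) {0..t}"
proof -
  have "((\<lambda>x. h (2 *\<^sub>R x + 0)) has_integral (I /\<^sub>R 2 ^ DIM(real)))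
           (cbox ((0 - 0) /\<^sub>R 2) ((2*t - 0) /\<^sub>R 2))"
    using assms(2) by (intro has_integral_affinity') auto
  then have "((\<lambda>x. h (2 * x)) has_integral (I / 2)) {0..t}"
    by simp
  from has_integral_mult_right[OF this, of 2] show ?thesis by simp
qed

lemma sub2:
  fixes h :: "real \<Rightarrow> real"
  assumes "(h has_integral I) {0..2*t-1}"
  shows "((\<lambda>x. 2 * h (2 * x - 1)) has_integral I) {1/2..t}"
proof -
  have "((\<lambda>x. h (2 *\<^sub>R x + (-1))) has_integral (I /\<^sub>R 2 ^ DIM(real)))
           (cbox ((0 - (-1)) /\<^sub>R 2) ((2*t-1 - (-1)) /\<^sub>R 2))"
    using assms by (intro has_integral_affinity') auto
  then have "((\<lambda>x. h (2 * x - 1)) has_integral (I / 2)) {1/2..t}"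
    by simp
  from has_integral_mult_right[OF this, of 2] show ?thesis by simp
qed

lemma concat_vd1:
  assumes "s < 1/2" "A differentiable at (2 * s)"
  shows "(path_concat A B has_vector_derivative (2 *\<^sub>R vector_derivative A (at (2 * s)))) (at s)"
proof -
  have dA: "(A has_vector_derivative vector_derivative A (at (2 * s))) (at ((\<lambda>x. 2*x) s))"
    using assms(2) vector_derivative_works by auto
  have d2: "((\<lambda>x::real. 2*x) has_vector_derivative 2) (at s)"
    by (auto intro!: derivative_eq_intros simp: has_real_derivative_iff_has_vector_derivative[symmetric])
  have "((A \<circ> (\<lambda>x. 2*x)) has_vector_derivative (2 *\<^sub>R vector_derivative A (at (2 * s)))) (at s)"
    by (rule vector_diff_chain_at[OF d2 dA])
  then show ?thesis
    by (rule has_vector_derivative_transform_within_open[where S="{..<1/2}"])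
       (use assms(1) in \<open>auto simp: path_concat_def\<close>)
qed

lemma concat_vd2:
  assumes "1/2 < s" "B differentiable at (2 * s-1)"
  shows "(path_concat A B has_vector_derivative (2 *\<^sub>R vector_derivative B (at (2 * s-1)))) (at s)"
proof -
  have dB: "(B has_vector_derivative vector_derivative B (at (2 * s-1))) (at ((\<lambda>x. 2*x-1) s))"
    using assms(2) vector_derivative_works by auto
  have d2: "((\<lambda>x::real. 2*x-1) has_vector_derivative 2) (at s)"
    by (auto intro!: derivative_eq_intros simp: has_real_derivative_iff_has_vector_derivative[symmetric])
  have "((B \<circ> (\<lambda>x. 2*x-1)) has_vector_derivative (2 *\<^sub>R vector_derivative B (at (2 * s-1)))) (at s)"
    by (rule vector_diff_chain_at[OF d2 dB])
  then have "((\<lambda>x. (B \<circ> (\<lambda>x. 2*x-1)) x + (A 1 - B 0)) has_vector_derivative (2 *\<^sub>R vector_derivative B (at (2 * s-1)))) (at s)"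
    by (auto intro!: derivative_eq_intros simp: o_def)
  then show ?thesis
    by (rule has_vector_derivative_transform_within_open[where S="{1/2<..}"])
       (use assms(1) in \<open>auto simp: path_concat_def\<close>)
qed

definition Fc :: "(real \<Rightarrow> real^'n) \<Rightarrow> (real \<Rightarrow> real^'n) \<Rightarrow> 'n list \<Rightarrow> real \<Rightarrow> real" where
  "Fc A B ws t = (if t \<le> 1/2 then sig_rev A ws (2 * t)
     else (\<Sum>k\<le>length ws. sig_rev B (take k ws) (2 * t - 1) * sig_rev A (drop k ws) 1))"

lemma good_has_integral:
  assumes "good X" "0 \<le> t" "t \<le> 1"
  shows "((\<lambda>s. sig_rev X ws s * vector_derivative X (at s) $ i) has_integral sig_rev X (i # ws) t) {0..t}"
  using assms unfolding good_def by (auto intro!: integrable_integral)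

context
  fixes A B :: "real \<Rightarrow> real^'n"
  assumes gA: "good A" and gB: "good B"
begin

lemma exc: "\<exists>E. finite E \<and> {0,1/2,1} \<subseteq> E \<and> (\<forall>s\<in>{0..1}-E. (s < 1/2 \<longrightarrow> A differentiable at (2 * s)) \<and> (1/2 < s \<longrightarrow> B differentiable at (2 * s - 1)))"
proof -
  obtain SA where SA: "finite SA" "\<forall>s\<in>{0<..<1} - SA. A differentiable (at s)"
    using gA unfolding good_def by blast
  obtain SB where SB: "finite SB" "\<forall>s\<in>{0<..<1} - SB. B differentiable (at s)"
    using gB unfolding good_def by blast
  let ?E = "{0,1/2,1} \<union> (\<lambda>x. x/2) ` SA \<union> (\<lambda>x. (x+1)/2) ` SB"
  have "(\<forall>s\<in>{0..1}-?E. (s < 1/2 \<longrightarrow> A differentiable at (2 * s)) \<and> (1/2 < s \<longrightarrow> B differentiable at (2 * s - 1)))"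
  proof (intro ballI conjI impI)
    fix s :: real assume s: "s \<in> {0..1} - ?E"
    { assume "s < 1/2"
      moreover have "2 * s \<notin> SA"
      proof
        assume "2 * s \<in> SA"
        then have "s \<in> (\<lambda>x. x/2) ` SA" by (intro image_eqI[of _ _ "2 * s"]) auto
        with s show False by auto
      qed
      ultimately show "A differentiable at (2 * s)" using s SA(2) by auto }
    { assume "1/2 < s"
      moreover have "2 * s - 1 \<notin> SB"
      proof
        assume "2 * s - 1 \<in> SB"
        then have "s \<in> (\<lambda>x. (x+1)/2) ` SB" by (intro image_eqI[of _ _ "2 * s - 1"]) auto
        with s show False by auto
      qed
      ultimately show "B differentiable at (2 * s - 1)" using s SB(2) by auto }
  qed
  then show ?thesis using SA SB by (intro exI[of _ ?E]) auto
qed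

lemma chen_step:
  assumes Q: "\<forall>s\<in>{0..1}. sig_rev (path_concat A B) ws s = Fc A B ws s" and t: "0 \<le> t" "t \<le> 1"
  shows "((\<lambda>s. sig_rev (path_concat A B) ws s * vector_derivative (path_concat A B) (at s) $ i)
           has_integral Fc A B (i # ws) t) {0..t}"
proof -
  obtain E where E: "finite E" "{0,1/2,1} \<subseteq> E"
    "\<forall>s\<in>{0..1}-E. (s < 1/2 \<longrightarrow> A differentiable at (2 * s)) \<and> (1/2 < s \<longrightarrow> B differentiable at (2 * s - 1))"
    using exc by blast
  let ?C = "path_concat A B"
  let ?f = "\<lambda>s. sig_rev ?C ws s * vector_derivative ?C (at s) $ i"
  have part1: "(?f has_integral sig_rev A (i # ws) (2 * t')) {0..t'}" if t': "0 \<le> t'" "t' \<le> 1/2" for t'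
  proof -
    have "((\<lambda>x. 2 * (sig_rev A ws (2 * x) * vector_derivative A (at (2 * x)) $ i)) has_integral sig_rev A (i # ws) (2 * t')) {0..t'}"
      by (rule sub1) (use t' good_has_integral[OF gA] in auto)
    then show ?thesis
    proof (rule has_integral_spike_finite[OF E(1), rotated])
      fix s assume s: "s \<in> {0..t'} - E"
      have "s \<noteq> 1/2" using s E(2) by (metis DiffD2 insert_subset)
      then have s1: "s \<in> {0..1} - E" "s < 1/2" using s t' by auto
      then have "vector_derivative ?C (at s) = 2 *\<^sub>R vector_derivative A (at (2 * s))"
        using E(3) concat_vd1 vector_derivative_at by blast
      moreover have "sig_rev ?C ws s = sig_rev A ws (2 * s)"
        using Q s1 by (auto simp: Fc_def)
      ultimately show "?f s = 2 * (sig_rev A ws (2 * s) * vector_derivative A (at (2 * s)) $ i)"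
        by simp
    qed
  qed
  show ?thesis
  proof (cases "t \<le> 1/2")
    case True
    then show ?thesis using part1[OF t(1) True] by (simp add: Fc_def)
  next
    case False
    have p1: "(?f has_integral sig_rev A (i # ws) 1) {0..1/2}"
      using part1[of "1/2"] by simp
    let ?g = "\<lambda>k x. sig_rev A (drop k ws) 1 * (2 * (sig_rev B (take k ws) (2 * x - 1) * vector_derivative B (at (2 * x - 1)) $ i))"
    have "((\<lambda>x. \<Sum>k\<le>length ws. ?g k x) has_integral (\<Sum>k\<le>length ws. sig_rev A (drop k ws) 1 * sig_rev B (i # take k ws) (2 * t - 1))) {1/2..t}"
    proof (rule has_integral_sum, simp)
      fix k
      have "((\<lambda>x. 2 * (sig_rev B (take k ws) (2 * x - 1) * vector_derivative B (at (2 * x - 1)) $ i)) has_integral sig_rev B (i # take k ws) (2 * t - 1)) {1/2..t}"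
        by (rule sub2) (use False t good_has_integral[OF gB] in auto)
      then show "(?g k has_integral sig_rev A (drop k ws) 1 * sig_rev B (i # take k ws) (2 * t - 1)) {1/2..t}"
        by (rule has_integral_mult_right)
    qed
    then have p2: "(?f has_integral (\<Sum>k\<le>length ws. sig_rev A (drop k ws) 1 * sig_rev B (i # take k ws) (2 * t - 1))) {1/2..t}"
    proof (rule has_integral_spike_finite[OF E(1), rotated])
      fix s assume s: "s \<in> {1/2..t} - E"
      have "s \<noteq> 1/2" using s E(2) by (metis DiffD2 insert_subset)
      then have s1: "s \<in> {0..1} - E" "1/2 < s" using s t by auto
      then have "vector_derivative ?C (at s) = 2 *\<^sub>R vector_derivative B (at (2 * s - 1))"
        using E(3) concat_vd2 vector_derivative_at by blast
      moreover have "sig_rev ?C ws s = (\<Sum>k\<le>length ws. sig_rev B (take k ws) (2 * s - 1) * sig_rev A (drop k ws) 1)"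
        using Q s1 by (auto simp: Fc_def)
      ultimately show "?f s = (\<Sum>k\<le>length ws. ?g k s)"
        by (simp add: sum_distrib_right sum_distrib_left algebra_simps)
    qed
    have "(?f has_integral (sig_rev A (i # ws) 1 + (\<Sum>k\<le>length ws. sig_rev A (drop k ws) 1 * sig_rev B (i # take k ws) (2 * t - 1)))) {0..t}"
      by (rule has_integral_combine[OF _ _ p1 p2]) (use False in auto)
    moreover have "Fc A B (i # ws) t = sig_rev A (i # ws) 1 + (\<Sum>k\<le>length ws. sig_rev A (drop k ws) 1 * sig_rev B (i # take k ws) (2 * t - 1))"
      using False unfolding Fc_def
      by (simp only: if_False length_Cons sum.atMost_Suc_shift) (simp add: mult.commute del: sig_rev.simps(2))
    ultimately show ?thesis by simp
  qed
qed

lemma chen_all: "s \<in> {0..1} \<Longrightarrow> sig_rev (path_concat A B) ws s = Fc A B ws s"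
proof (induction ws arbitrary: s)
  case Nil
  then show ?case by (simp add: Fc_def)
next
  case (Cons i ws)
  have "((\<lambda>s. sig_rev (path_concat A B) ws s * vector_derivative (path_concat A B) (at s) $ i)
           has_integral Fc A B (i # ws) s) {0..s}"
    using Cons by (intro chen_step) auto
  then show ?case by (simp add: integral_unique)
qed

lemma chen1: "sig_rev (path_concat A B) ws 1 = (\<Sum>k\<le>length ws. sig_rev B (take k ws) 1 * sig_rev A (drop k ws) 1)"
  using chen_all[of 1 ws] by (simp add: Fc_def)

lemma good_concat: "good (path_concat A B)"
  unfolding good_def
proof (intro conjI allI impI)
  obtain E where E: "finite E" "{0,1/2,1} \<subseteq> E"
    "\<forall>s\<in>{0..1}-E. (s < 1/2 \<longrightarrow> A differentiable at (2 * s)) \<and> (1/2 < s \<longrightarrow> B differentiable at (2 * s - 1))"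
    using exc by blast
  have "\<forall>s\<in>{0<..<1} - E. path_concat A B differentiable (at s)"
  proof
    fix s assume s: "s \<in> {0<..<1} - E"
    have "s \<noteq> 1/2" using s E(2) by (metis DiffD2 insert_subset)
    then consider "s < 1/2" | "1/2 < s" by linarith
    then show "path_concat A B differentiable (at s)"
    proof cases
      case 1 then show ?thesis using E(3) s concat_vd1 differentiableI_vector by fastforce
    next
      case 2 then show ?thesis using E(3) s concat_vd2 differentiableI_vector by fastforce
    qed
  qed
  then show "\<exists>S. finite S \<and> (\<forall>s\<in>{0<..<1} - S. path_concat A B differentiable (at s))"
    using E(1) by blast
next
  fix ws i and t :: real assume "0 \<le> t \<and> t \<le> 1"
  then show "(\<lambda>s. sig_rev (path_concat A B) ws s * vector_derivative (path_concat A B) (at s) $ i) integrable_on {0..t}"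
    using chen_step chen_all by blast
qed

end

lemma valid_concat:
  assumes "piecewise_smooth_path A" "piecewise_smooth_path B"
  shows "piecewise_smooth_path (path_concat A B)"
proof -
  have "path_concat A B = A +++ (\<lambda>t. B t - (B 0 - A 1))"
    by (auto simp: path_concat_def joinpaths_def fun_eq_iff algebra_simps)
  moreover have "valid_path (\<lambda>t. B t - (B 0 - A 1))"
    using assms(2) valid_path_offset unfolding piecewise_smooth_path_def valid_path_def by blast
  ultimately show ?thesis using assms unfolding piecewise_smooth_path_def
    by (metis valid_path_def valid_path_join pathfinish_def pathstart_def diff_self diff_diff_eq2 add_diff_cancel_left')
qed



definition ev :: "'n::finite \<Rightarrow> real^'n" where "ev j = (\<chi> x. if x = j then 1 else 0)"

lemma lin_sig_scale: "lin_sig (a *\<^sub>R v) u = a ^ length u * lin_sig v u"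
proof -
  have "prod_list (map (\<lambda>x. (a *\<^sub>R v) $ x) u) = a ^ length u * prod_list (map (\<lambda>x. v $ x) u)"
    by (induction u) auto
  then show ?thesis by (simp add: lin_sig_def)
qed

lemma lin_sr: "sig_rev (lin p v) ws 1 = lin_sig v ws"
  by (simp add: lin_sig_rev)

lemma deriv_leaf: "((\<lambda>x::real. x ^ n * c) has_field_derivative (if n = 1 then c else 0)) (at 0)"
proof -
  have "((\<lambda>x::real. x ^ n * c) has_field_derivative (real n * (0 ^ (n - Suc 0))) * c) (at 0)"
    by (intro DERIV_cmult_right DERIV_pow)
  moreover have "(real n * (0 ^ (n - Suc 0))) * c = (if n = 1 then c else 0)"
    by (cases n) auto
  ultimately show ?thesis by simp
qed

lemma finite_words: "finite {w::'n::finite list. length w = n}"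
  using finite_lists_length_eq[of "UNIV::'n set" n] by simp

lemma sum_words_gen:
  fixes h :: "'n::finite \<Rightarrow> 'n list \<Rightarrow> 'n list" and f :: "'n list \<Rightarrow> real"
  assumes "\<And>w. length w = Suc n \<Longrightarrow> \<exists>x u. w = h x u \<and> length u = n"
    and "\<And>x u. length u = n \<Longrightarrow> length (h x u) = Suc n"
    and "\<And>x u y v. h x u = h y v \<Longrightarrow> x = y \<and> u = v"
  shows "(\<Sum>w\<in>{w. length w = Suc n}. f w) = (\<Sum>x\<in>UNIV. \<Sum>u\<in>{u. length u = n}. f (h x u))"
proof -
  have eq: "{w::'n list. length w = Suc n} = (\<lambda>p. h (fst p) (snd p)) ` (UNIV \<times> {u. length u = n})"
  proof
    show "{w::'n list. length w = Suc n} \<subseteq> (\<lambda>p. h (fst p) (snd p)) ` (UNIV \<times> {u. length u = n})"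
    proof
      fix w :: "'n list" assume "w \<in> {w. length w = Suc n}"
      then obtain x u where "w = h x u" "length u = n" using assms(1) by blast
      then show "w \<in> (\<lambda>p. h (fst p) (snd p)) ` (UNIV \<times> {u. length u = n})"
        by (intro image_eqI[where x="(x,u)"]) auto
    qed
    show "(\<lambda>p. h (fst p) (snd p)) ` (UNIV \<times> {u. length u = n}) \<subseteq> {w::'n list. length w = Suc n}"
      using assms(2) by auto
  qed
  have inj: "inj_on (\<lambda>p. h (fst p) (snd p)) (UNIV \<times> {u::'n list. length u = n})"
    unfolding inj_on_def using assms(3) by (simp add: prod_eq_iff)
  have "(\<Sum>w\<in>{w. length w = Suc n}. f w) = (\<Sum>p\<in>UNIV \<times> {u. length u = n}. f (h (fst p) (snd p)))"
    unfolding eq by (subst sum.reindex[OF inj]) (simp add: o_def)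
  also have "\<dots> = (\<Sum>x\<in>UNIV. \<Sum>u\<in>{u. length u = n}. f (h x u))"
    by (simp only: sum.cartesian_product case_prod_unfold)
  finally show ?thesis .
qed

lemma sum_words_snoc:
  fixes f :: "'n::finite list \<Rightarrow> real"
  shows "(\<Sum>w\<in>{w. length w = Suc n}. f w) = (\<Sum>x\<in>UNIV. \<Sum>u\<in>{u. length u = n}. f (u @ [x]))"
  by (rule sum_words_gen) (auto simp: length_Suc_conv_rev)

lemma sum_words_cons:
  fixes f :: "'n::finite list \<Rightarrow> real"
  shows "(\<Sum>w\<in>{w. length w = Suc n}. f w) = (\<Sum>x\<in>UNIV. \<Sum>u\<in>{u. length u = n}. f (x # u))"
  by (rule sum_words_gen) (auto simp: length_Suc_conv)

lemma sum_ev: "(\<Sum>x\<in>UNIV. (ev j :: real^'n::finite) $ x * g x) = g j"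
proof -
  have "\<And>x. (ev j :: real^'n) $ x * g x = (if x = j then g j else 0)" by (simp add: ev_def)
  then show ?thesis by simp
qed

lemma lin_sig_single: "lin_sig v [x] = v $ x"
  by (simp add: lin_sig_def)

lemma deriv_zero_sum:
  fixes c :: "'a \<Rightarrow> 'b \<Rightarrow> nat \<Rightarrow> real"
  assumes "\<And>l. (\<Sum>x\<in>S. \<Sum>u\<in>U x. \<Sum>k\<in>V x u. l ^ g x u k * c x u k) = K"
  shows "(\<Sum>x\<in>S. \<Sum>u\<in>U x. \<Sum>k\<in>V x u. if g x u k = 1 then c x u k else 0) = 0"
proof -
  have D: "((\<lambda>l. \<Sum>x\<in>S. \<Sum>u\<in>U x. \<Sum>k\<in>V x u. l ^ g x u k * c x u k) has_field_derivative
     (\<Sum>x\<in>S. \<Sum>u\<in>U x. \<Sum>k\<in>V x u. if g x u k = 1 then c x u k else 0)) (at 0)"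
    by (intro DERIV_sum deriv_leaf)
  have "(\<lambda>l. \<Sum>x\<in>S. \<Sum>u\<in>U x. \<Sum>k\<in>V x u. l ^ g x u k * c x u k) = (\<lambda>_. K)"
    using assms by auto
  then have "((\<lambda>l. \<Sum>x\<in>S. \<Sum>u\<in>U x. \<Sum>k\<in>V x u. l ^ g x u k * c x u k) has_field_derivative 0) (at 0)"
    by simp
  with D show ?thesis using DERIV_unique by blast
qed

lemma span:
  fixes \<rho> :: "'n::finite list \<Rightarrow> real"
  assumes "\<And>X. good X \<Longrightarrow> piecewise_smooth_path X \<Longrightarrow> (\<Sum>u\<in>{u. length u = n}. sig_coeff X u * \<rho> u) = 0"
    and "length u = n"
  shows "\<rho> u = 0"
  using assms
proof (induction n arbitrary: \<rho> u)
  case 0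
  have "(\<Sum>u\<in>{u::'n list. length u = 0}. sig_coeff (lin 0 0) u * \<rho> u) = 0"
    using 0(1) good_lin lin_valid by blast
  moreover have "{u::'n list. length u = 0} = {[]}" by auto
  ultimately show ?case using 0(2) by (simp add: sig_coeff_def)
next
  case (Suc n)
  obtain u' j where u: "u = u' @ [j]" "length u' = n"
    using Suc.prems(2) by (metis length_Suc_conv_rev)
  have "\<rho> (u' @ [j]) = 0"
  proof (rule Suc.IH[of "\<lambda>v. \<rho> (v @ [j])" u', OF _ u(2)])
    fix X :: "real \<Rightarrow> real^'n" assume gX: "good X" and vX: "piecewise_smooth_path X"
    define c where "c = (\<lambda>x u k. lin_sig (ev j) (take k (x # rev u)) * sig_rev X (drop k (x # rev u)) 1 * \<rho> (u @ [x]))"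
    have P0: "(\<Sum>x\<in>UNIV. \<Sum>u\<in>{u. length u = n}. \<Sum>k\<in>{..Suc n}. l ^ (\<lambda>x u k. k) x u k * c x u k) = 0" for l
    proof -
      let ?Y = "path_concat X (lin 0 (l *\<^sub>R ev j))"
      have "0 = (\<Sum>w\<in>{w. length w = Suc n}. sig_coeff ?Y w * \<rho> w)"
        using Suc.prems(1) good_concat[OF gX good_lin] valid_concat[OF vX lin_valid] by metis
      also have "\<dots> = (\<Sum>x\<in>UNIV. \<Sum>u\<in>{u. length u = n}. sig_coeff ?Y (u @ [x]) * \<rho> (u @ [x]))"
        by (rule sum_words_snoc)
      also have "\<dots> = (\<Sum>x\<in>UNIV. \<Sum>u\<in>{u. length u = n}. \<Sum>k\<in>{..Suc n}. l ^ k * c x u k)"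
      proof (intro sum.cong refl)
        fix x and u :: "'n list" assume "u \<in> {u. length u = n}"
        then have lu: "length u = n" by simp
        have "sig_coeff ?Y (u @ [x]) = sig_rev ?Y (x # rev u) 1"
          by (simp add: sig_coeff_def del: sig_rev.simps)
        also have "\<dots> = (\<Sum>k\<le>length (x # rev u). sig_rev (lin 0 (l *\<^sub>R ev j)) (take k (x # rev u)) 1 * sig_rev X (drop k (x # rev u)) 1)"
          by (rule chen1[OF gX good_lin])
        also have "\<dots> = (\<Sum>k\<le>Suc n. lin_sig (l *\<^sub>R ev j) (take k (x # rev u)) * sig_rev X (drop k (x # rev u)) 1)"
          using lu by (simp only: lin_sr length_Cons length_rev)
        also have "\<dots> = (\<Sum>k\<le>Suc n. l ^ k * (lin_sig (ev j) (take k (x # rev u)) * sig_rev X (drop k (x # rev u)) 1))"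
          by (intro sum.cong refl) (use lu in \<open>auto simp: lin_sig_scale min_def\<close>)
        finally show "sig_coeff ?Y (u @ [x]) * \<rho> (u @ [x]) = (\<Sum>k\<in>{..Suc n}. l ^ k * c x u k)"
          unfolding c_def by (simp only: sum_distrib_right mult.assoc)
      qed
      finally show ?thesis by simp
    qed
    have "(\<Sum>x\<in>UNIV. \<Sum>u\<in>{u. length u = n}. \<Sum>k\<in>{..Suc n}. if k = 1 then c x u k else 0) = 0"
      using deriv_zero_sum[where g="\<lambda>x u k. k", OF P0] by simp
    moreover have "(\<Sum>k\<in>{..Suc n}. if k = 1 then c x u k else 0) = c x u 1" for x u
      by (simp only: sum.delta[OF finite_atMost]) simp
    ultimately have "(\<Sum>x\<in>UNIV. \<Sum>u\<in>{u. length u = n}. c x u 1) = 0"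
      by simp
    then have "(\<Sum>x\<in>UNIV. \<Sum>u\<in>{u. length u = n}. ev j $ x * (sig_coeff X u * \<rho> (u @ [x]))) = 0"
      by (simp add: c_def lin_sig_single sig_coeff_def mult.assoc)
    then have "(\<Sum>x\<in>UNIV. ev j $ x * (\<Sum>u\<in>{u. length u = n}. sig_coeff X u * \<rho> (u @ [x]))) = 0"
      by (simp add: sum_distrib_left)
    then show "(\<Sum>u\<in>{u. length u = n}. sig_coeff X u * \<rho> (u @ [j])) = 0"
      by (simp only: sum_ev[where g="\<lambda>x. \<Sum>u\<in>{u. length u = n}. sig_coeff X u * \<rho> (u @ [x])"])
  qed
  then show ?case using u by simp
qed

lemma rev_lin: "reversepath (lin 0 (a *\<^sub>R v)) = lin (a *\<^sub>R v) ((-a) *\<^sub>R v)"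
  by (auto simp: reversepath_def lin_def fun_eq_iff algebra_simps)

lemma inner_eval:
  fixes c :: "nat \<Rightarrow> nat \<Rightarrow> real"
  shows "(\<Sum>k\<in>{..Suc n}. \<Sum>l\<in>{..Suc n - k}. if k + (Suc n - k - l) = 1 then c k l else 0) = c 0 n + c 1 n"
proof -
  have "(\<Sum>l\<in>{..Suc n - k}. if k + (Suc n - k - l) = 1 then c k l else 0) = (if k \<le> 1 then c k n else 0)"
    if "k \<in> {..Suc n}" for k
  proof -
    have "(\<Sum>l\<in>{..Suc n - k}. if k + (Suc n - k - l) = 1 then c k l else 0) = (\<Sum>l\<in>{..Suc n - k}. if l = n then c k l else 0)"
      by (rule sum.cong) (use that in auto)
    also have "\<dots> = (if k \<le> 1 then c k n else 0)"
    proof -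
      have "(n \<in> {..Suc n - k}) = (k \<le> 1)" using that by auto
      then show ?thesis by (simp only: sum.delta[OF finite_atMost])
    qed
    finally show ?thesis .
  qed
  then have "(\<Sum>k\<in>{..Suc n}. \<Sum>l\<in>{..Suc n - k}. if k + (Suc n - k - l) = 1 then c k l else 0) = (\<Sum>k\<in>{..Suc n}. if k \<le> 1 then c k n else 0)"
    by (rule sum.cong[OF refl])
  also have "\<dots> = (\<Sum>k\<in>{0,1}. if k \<le> 1 then c k n else 0)"
    by (rule sum.mono_neutral_right) auto
  also have "\<dots> = c 0 n + c 1 n" by simp
  finally show ?thesis .
qed

lemma lin_sig_Nil: "lin_sig v [] = 1"
  by (simp add: lin_sig_def)

lemma key:
  fixes \<phi> :: "'n::finite list \<Rightarrow> real"
  assumes ci: "conjugation_invariant (Suc n) \<phi>" and lu: "length u = n"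
  shows "\<phi> (j # u) = \<phi> (u @ [j])"
proof -
  let ?m = "Suc n"
  let ?\<rho> = "\<lambda>u. \<phi> (j # u) - \<phi> (u @ [j])"
  have "?\<rho> u = 0"
  proof (rule span[OF _ lu])
    fix A :: "real \<Rightarrow> real^'n" assume gA: "good A" and vA: "piecewise_smooth_path A"
    define e where "e = (ev j :: real^'n)"
    define c where "c = (\<lambda>w k l. \<phi> w * ((-1)^k * lin_sig e (take k (rev w)) * sig_rev A (take l (drop k (rev w))) 1
                          * lin_sig e (drop l (drop k (rev w)))))"
    have P: "(\<Sum>w\<in>{w. length w = ?m}. \<Sum>k\<in>{..?m}. \<Sum>l\<in>{..?m - k}. \<epsilon> ^ (\<lambda>w k l. k + (?m - k - l)) w k l * c w k l)
             = sig_pair ?m A \<phi>" for \<epsilon> :: real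
    proof -
      let ?B = "lin 0 (\<epsilon> *\<^sub>R e)"
      let ?R = "lin (\<epsilon> *\<^sub>R e) ((-\<epsilon>) *\<^sub>R e)"
      let ?C = "path_concat (path_concat ?B A) ?R"
      have "sig_pair ?m A \<phi> = sig_pair ?m (path_concat (path_concat ?B A) (reversepath ?B)) \<phi>"
        using ci vA lin_valid unfolding conjugation_invariant_def by blast
      also have "\<dots> = sig_pair ?m ?C \<phi>" by (simp only: rev_lin)
      also have "\<dots> = (\<Sum>w\<in>{w. length w = ?m}. \<Sum>k\<in>{..?m}. \<Sum>l\<in>{..?m - k}. \<epsilon> ^ (k + (?m - k - l)) * c w k l)"
        unfolding sig_pair_def
      proof (rule sum.cong[OF refl])
        fix w :: "'n list" assume "w \<in> {w. length w = ?m}"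
        then have lw: "length (rev w) = ?m" by simp
        have gBA: "good (path_concat ?B A)" by (rule good_concat[OF good_lin gA])
        have "sig_coeff ?C w = sig_rev ?C (rev w) 1"
          by (simp add: sig_coeff_def del: sig_rev.simps)
        also have "\<dots> = (\<Sum>k\<le>length (rev w). sig_rev ?R (take k (rev w)) 1 * sig_rev (path_concat ?B A) (drop k (rev w)) 1)"
          by (rule chen1[OF gBA good_lin])
        also have "\<dots> = (\<Sum>k\<le>?m. sig_rev ?R (take k (rev w)) 1 * (\<Sum>l\<le>?m - k. sig_rev A (take l (drop k (rev w))) 1 * sig_rev ?B (drop l (drop k (rev w))) 1))"
          by (simp only: lw chen1[OF good_lin gA] length_drop)
        also have "\<dots> = (\<Sum>k\<le>?m. \<Sum>l\<le>?m - k. lin_sig ((-\<epsilon>) *\<^sub>R e) (take k (rev w)) * (sig_rev A (take l (drop k (rev w))) 1 * lin_sig (\<epsilon> *\<^sub>R e) (drop l (drop k (rev w)))))"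
          by (simp only: lin_sr sum_distrib_left)
        also have "\<dots> = (\<Sum>k\<le>?m. \<Sum>l\<le>?m - k. \<epsilon> ^ (k + (?m - k - l)) * ((-1)^k * lin_sig e (take k (rev w)) * sig_rev A (take l (drop k (rev w))) 1
                          * lin_sig e (drop l (drop k (rev w)))))"
        proof (intro sum.cong refl)
          fix k l assume k: "k \<in> {..?m}" and l: "l \<in> {..?m - k}"
          have l1: "length (take k (rev w)) = k" using k lw by auto
          have l2: "length (drop l (drop k (rev w))) = ?m - k - l" using lw by auto
          show "lin_sig ((-\<epsilon>) *\<^sub>R e) (take k (rev w)) * (sig_rev A (take l (drop k (rev w))) 1 * lin_sig (\<epsilon> *\<^sub>R e) (drop l (drop k (rev w))))
             = \<epsilon> ^ (k + (?m - k - l)) * ((-1)^k * lin_sig e (take k (rev w)) * sig_rev A (take l (drop k (rev w))) 1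
                          * lin_sig e (drop l (drop k (rev w))))"
          proof -
            have pm: "(-\<epsilon>)^k = (-1)^k * \<epsilon>^k" by (rule power_minus)
            show ?thesis by (simp only: lin_sig_scale l1 l2 power_add pm mult_ac)
          qed
        qed
        finally show "sig_coeff ?C w * \<phi> w = (\<Sum>k\<in>{..?m}. \<Sum>l\<in>{..?m - k}. \<epsilon> ^ (k + (?m - k - l)) * c w k l)"
          unfolding c_def by (simp only: sum_distrib_right sum_distrib_left mult_ac)
      qed
      finally show ?thesis by simp
    qed
    have "(\<Sum>w\<in>{w. length w = ?m}. \<Sum>k\<in>{..?m}. \<Sum>l\<in>{..?m - k}. if k + (?m - k - l) = 1 then c w k l else 0) = 0"
      by (rule deriv_zero_sum[OF P])
    then have "(\<Sum>w\<in>{w. length w = ?m}. c w 0 n + c w 1 n) = 0"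
      by (simp only: inner_eval)
    then have "(\<Sum>w\<in>{w. length w = ?m}. c w 0 n) + (\<Sum>w\<in>{w. length w = ?m}. c w 1 n) = 0"
      by (simp only: sum.distrib)
    moreover have "(\<Sum>w\<in>{w. length w = ?m}. c w 0 n) = (\<Sum>u\<in>{u. length u = n}. sig_coeff A u * \<phi> (j # u))"
    proof -
      have "(\<Sum>w\<in>{w. length w = ?m}. c w 0 n) = (\<Sum>x\<in>UNIV. \<Sum>u\<in>{u. length u = n}. c (x # u) 0 n)"
        by (rule sum_words_cons)
      also have "\<dots> = (\<Sum>x\<in>UNIV. e $ x * (\<Sum>u\<in>{u. length u = n}. sig_coeff A u * \<phi> (x # u)))"
        unfolding sum_distrib_left
        by (intro sum.cong refl) (simp add: c_def lin_sig_single lin_sig_Nil sig_coeff_def mult_ac)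
      also have "\<dots> = (\<Sum>u\<in>{u. length u = n}. sig_coeff A u * \<phi> (j # u))"
        unfolding e_def by (rule sum_ev)
      finally show ?thesis .
    qed
    moreover have "(\<Sum>w\<in>{w. length w = ?m}. c w 1 n) = - (\<Sum>u\<in>{u. length u = n}. sig_coeff A u * \<phi> (u @ [j]))"
    proof -
      have "(\<Sum>w\<in>{w. length w = ?m}. c w 1 n) = (\<Sum>x\<in>UNIV. \<Sum>u\<in>{u. length u = n}. c (u @ [x]) 1 n)"
        by (rule sum_words_snoc)
      also have "\<dots> = (\<Sum>x\<in>UNIV. e $ x * (\<Sum>u\<in>{u. length u = n}. - (sig_coeff A u * \<phi> (u @ [x]))))"
        unfolding sum_distrib_left
        by (intro sum.cong refl) (simp add: c_def lin_sig_single lin_sig_Nil sig_coeff_def mult_ac)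
      also have "\<dots> = (\<Sum>u\<in>{u. length u = n}. - (sig_coeff A u * \<phi> (u @ [j])))"
        unfolding e_def by (rule sum_ev)
      finally show ?thesis by (simp add: sum_negf)
    qed
    ultimately show "(\<Sum>u\<in>{u. length u = n}. sig_coeff A u * ?\<rho> u) = 0"
      by (simp add: right_diff_distrib sum_subtractf)
  qed
  then show ?thesis by simp
qed

theorem mainTheorem5:
  fixes \<phi> :: "'n::finite list \<Rightarrow> real" and m :: nat
  assumes "in_Tm m \<phi>"
    and "conjugation_invariant m \<phi>"
  shows "\<phi> = shift_m m \<phi>"
proof (rule ext)
  fix v :: "'n list"
  show "\<phi> v = shift_m m \<phi> v"
  proof (cases "length v = m")
    case False
    then show ?thesis using assms(1) by (simp add: in_Tm_def shift_m_def)
  next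
    case True
    show ?thesis
    proof (cases v)
      case Nil
      then show ?thesis using True by (simp add: shift_m_def)
    next
      case (Cons j u)
      then have m: "m = Suc (length u)" using True by simp
      have "\<phi> (j # u) = \<phi> (u @ [j])"
        by (rule key) (use assms(2) m in auto)
      then show ?thesis using True Cons by (simp add: shift_m_def)
    qed
  qed
qed

end
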